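(* Let $G$ be a finite group of odd order. Then $\mathrm{cp}(G)\geq\lambda_3(G)^2$.
   Context: For an integer $e$ and a finite group $G$, $\lambda_e(G)$ denotes the maximum over all automorphisms $\alpha$ of $G$ of $|\{g\in G:\alpha(g)=g^e\}|/|G|$. $\mathrm{cp}(G)$ denotes the commuting probability of $G$, i.e. $|\{(x,y)\in G^2: xy=yx\}|/|G|^2$. *)

theory Defs
  imports "HOL-Algebra.Algebra"
begin

definition comm_prob :: "('a, 'b) monoid_scheme \<Rightarrow> real" where
  "comm_prob G =
     real (card {(x, y). x \<in> carrier G \<and> y \<in> carrier G \<and> x \<otimes>\<^bsub>G\<^esub> y = y \<otimes>\<^bsub>G\<^esub> x})
     / real (card (carrier G)) ^ 2"

definition lambda_e :: "int \<Rightarrow> ('a, 'b) monoid_scheme \<Rightarrow> real" where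
  "lambda_e e G =
     Max ((\<lambda>\<alpha>. real (card {g \<in> carrier G. \<alpha> g = g [^]\<^bsub>G\<^esub> e}) / real (card (carrier G)))
          ` iso G G)"

end

theory Submission
  imports Defs
begin

locale cubeaut = group +
  fixes a
  assumes iso: "a \<in> iso G G" and fin: "finite (carrier G)" and odd: "odd (order G)"
begin

lemma ahom: "a \<in> hom G G" using iso by (simp add: iso_imp_homomorphism)
lemma aclosed[simp]: "x \<in> carrier G \<Longrightarrow> a x \<in> carrier G"
  using ahom by (auto simp: hom_def)
lemma amult[simp]: "x \<in> carrier G \<Longrightarrow> y \<in> carrier G \<Longrightarrow> a (x \<otimes> y) = a x \<otimes> a y"
  using ahom by (simp add: hom_mult)
lemma ainv[simp]: "x \<in> carrier G \<Longrightarrow> a (inv x) = inv (a x)"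
proof -
  assume x: "x \<in> carrier G"
  have "group_hom G G a" using ahom by (simp add: group_hom_def group_hom_axioms_def is_group)
  then show ?thesis using x by (simp add: group_hom.hom_inv)
qed
lemma ainj: "x \<in> carrier G \<Longrightarrow> y \<in> carrier G \<Longrightarrow> a x = a y \<Longrightarrow> x = y"
  using iso by (auto simp: iso_iff inj_on_def)
lemma asurj: "y \<in> carrier G \<Longrightarrow> \<exists>x\<in>carrier G. a x = y"
  using iso unfolding iso_iff by (metis imageE)

lemma linv_assoc[simp]: "x \<in> carrier G \<Longrightarrow> y \<in> carrier G \<Longrightarrow> inv x \<otimes> (x \<otimes> y) = y"
  by (simp flip: m_assoc)
lemma rinv_assoc[simp]: "x \<in> carrier G \<Longrightarrow> y \<in> carrier G \<Longrightarrow> x \<otimes> (inv x \<otimes> y) = y"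
  by (simp flip: m_assoc)

lemma sq_inj:
  assumes x: "x \<in> carrier G" and y: "y \<in> carrier G" and e: "x \<otimes> x = y \<otimes> y"
  shows "x = y"
proof -
  obtain k where k: "order G = 2*k+1" using odd oddE by blast
  have gen: "z = (z \<otimes> z) [^] (k+1)" if z: "z \<in> carrier G" for z
  proof -
    have zz: "z \<otimes> z = z [^] (2::nat)" using z by (simp add: numeral_2_eq_2)
    have "(z \<otimes> z) [^] (k+1) = z [^] (2 * (k+1))" unfolding zz using z by (rule nat_pow_pow)
    also have "2 * (k+1) = Suc (order G)" using k by simp
    also have "z [^] (Suc (order G)) = z [^] order G \<otimes> z" by (rule nat_pow_Suc)
    also have "\<dots> = z" using z by (simp add: pow_order_eq_1)
    finally show ?thesis by simp
  qed
  show ?thesis using gen[OF x] gen[OF y] e by simp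
qed

definition S where "S = {g \<in> carrier G. a g = g \<otimes> g \<otimes> g}"
definition F where "F = {g \<in> carrier G. a g = g}"
definition Cen where "Cen y = {g \<in> carrier G. y \<otimes> g = g \<otimes> y}"

lemma SF: "card S * card F \<le> card (carrier G)"
proof -
  have inj: "inj_on (\<lambda>(s,f). s \<otimes> f) (S \<times> F)"
  proof (rule inj_onI, clarify)
    fix s f s' f' assume s: "s \<in> S" and f: "f \<in> F" and s': "s' \<in> S" and f': "f' \<in> F"
      and e: "s \<otimes> f = s' \<otimes> f'"
    have c: "s \<in> carrier G" "f \<in> carrier G" "s' \<in> carrier G" "f' \<in> carrier G"
      using s f s' f' by (auto simp: S_def F_def)
    have "a (s \<otimes> f) = a (s' \<otimes> f')" using e by simp
    then have "s \<otimes> s \<otimes> s \<otimes> f = s' \<otimes> s' \<otimes> s' \<otimes> f'"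
      using s f s' f' c by (simp add: S_def F_def)
    also have "\<dots> = s' \<otimes> s' \<otimes> (s' \<otimes> f')" using c by (simp add: m_assoc)
    also have "\<dots> = s' \<otimes> s' \<otimes> (s \<otimes> f)" using e by simp
    finally have "s \<otimes> s \<otimes> s \<otimes> f = s' \<otimes> s' \<otimes> s \<otimes> f" using c by (simp add: m_assoc)
    then have "s \<otimes> s = s' \<otimes> s'" using c by simp
    then have "s = s'" using c sq_inj by blast
    then show "s = s' \<and> f = f'" using e c by simp
  qed
  have "(\<lambda>(s,f). s \<otimes> f) ` (S \<times> F) \<subseteq> carrier G" by (auto simp: S_def F_def)
  then have "card (S \<times> F) \<le> card (carrier G)" using card_inj_on_le[OF inj] fin by blast
  then show ?thesis by (simp add: card_cartesian_product)
qed

lemma cube_conj: "h \<in> carrier G \<Longrightarrow> x \<in> carrier G \<Longrightarrow>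
  (h \<otimes> x \<otimes> inv h) \<otimes> (h \<otimes> x \<otimes> inv h) \<otimes> (h \<otimes> x \<otimes> inv h) = h \<otimes> (x \<otimes> x \<otimes> x) \<otimes> inv h"
  by (simp add: m_assoc)

lemma conj_S:
  assumes h: "h \<in> carrier G" and x: "x \<in> S" and hx: "h \<otimes> x \<otimes> inv h \<in> S"
  shows "inv h \<otimes> a h \<in> Cen (x \<otimes> x \<otimes> x)"
proof -
  have xc: "x \<in> carrier G" and ax: "a x = x \<otimes> x \<otimes> x" using x by (auto simp: S_def)
  define c where "c = x \<otimes> x \<otimes> x"
  define u where "u = a h"
  have cc: "c \<in> carrier G" and uc: "u \<in> carrier G" using xc h by (auto simp: c_def u_def)
  have "a (h \<otimes> x \<otimes> inv h) = u \<otimes> c \<otimes> inv u" using h xc ax by (simp add: u_def c_def)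
  moreover have "a (h \<otimes> x \<otimes> inv h) = h \<otimes> c \<otimes> inv h"
    using hx cube_conj[OF h xc] by (simp add: S_def c_def)
  ultimately have e: "u \<otimes> c \<otimes> inv u = h \<otimes> c \<otimes> inv h" by simp
  have "inv h \<otimes> (u \<otimes> c \<otimes> inv u) \<otimes> u = inv h \<otimes> (h \<otimes> c \<otimes> inv h) \<otimes> u" using e by simp
  then have "inv h \<otimes> u \<otimes> c = c \<otimes> (inv h \<otimes> u)" using h cc uc by (simp add: m_assoc)
  then show ?thesis using h uc cc by (simp add: Cen_def c_def u_def)
qed

lemma conj_count:
  assumes g: "g \<in> carrier G"
  shows "card {y \<in> carrier G. g \<otimes> y \<otimes> inv g \<in> S} = card S"
proof (rule bij_betw_same_card[of "\<lambda>y. g \<otimes> y \<otimes> inv g"], rule bij_betwI')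
  fix x y assume "x \<in> {y \<in> carrier G. g \<otimes> y \<otimes> inv g \<in> S}" "y \<in> {y \<in> carrier G. g \<otimes> y \<otimes> inv g \<in> S}"
  then show "(g \<otimes> x \<otimes> inv g = g \<otimes> y \<otimes> inv g) = (x = y)" using g by auto
next
  fix x assume "x \<in> {y \<in> carrier G. g \<otimes> y \<otimes> inv g \<in> S}"
  then show "g \<otimes> x \<otimes> inv g \<in> S" by simp
next
  fix z assume z: "z \<in> S"
  then have zc: "z \<in> carrier G" by (simp add: S_def)
  have "g \<otimes> (inv g \<otimes> z \<otimes> g) \<otimes> inv g = z" using g zc by (simp add: m_assoc)
  then show "\<exists>x\<in>{y \<in> carrier G. g \<otimes> y \<otimes> inv g \<in> S}. z = g \<otimes> x \<otimes> inv g"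
    using z zc g by (intro bexI[of _ "inv g \<otimes> z \<otimes> g"]) auto
qed

lemma Cen_conj_le:
  assumes g: "g \<in> carrier G" and y: "y \<in> carrier G"
  shows "card (Cen (g \<otimes> y \<otimes> inv g)) \<le> card (Cen y)"
proof -
  have "Cen (g \<otimes> y \<otimes> inv g) \<subseteq> (\<lambda>c. g \<otimes> c \<otimes> inv g) ` Cen y"
  proof
    fix c assume c: "c \<in> Cen (g \<otimes> y \<otimes> inv g)"
    then have cc: "c \<in> carrier G" and e: "g \<otimes> y \<otimes> inv g \<otimes> c = c \<otimes> (g \<otimes> y \<otimes> inv g)"
      by (auto simp: Cen_def)
    have "inv g \<otimes> (g \<otimes> y \<otimes> inv g \<otimes> c) \<otimes> g = inv g \<otimes> (c \<otimes> (g \<otimes> y \<otimes> inv g)) \<otimes> g"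
      using e by simp
    then have "y \<otimes> (inv g \<otimes> c \<otimes> g) = (inv g \<otimes> c \<otimes> g) \<otimes> y" using g y cc by (simp add: m_assoc)
    then have "inv g \<otimes> c \<otimes> g \<in> Cen y" using g cc by (simp add: Cen_def)
    moreover have "c = g \<otimes> (inv g \<otimes> c \<otimes> g) \<otimes> inv g" using g cc by (simp add: m_assoc)
    ultimately show "c \<in> (\<lambda>c. g \<otimes> c \<otimes> inv g) ` Cen y" by blast
  qed
  then have "card (Cen (g \<otimes> y \<otimes> inv g)) \<le> card ((\<lambda>c. g \<otimes> c \<otimes> inv g) ` Cen y)"
    by (rule card_mono[rotated]) (rule finite_imageI, rule finite_subset[OF _ fin], auto simp: Cen_def)
  also have "\<dots> \<le> card (Cen y)" by (rule card_image_le) (rule finite_subset[OF _ fin], auto simp: Cen_def)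
  finally show ?thesis .
qed

lemma Cen_cube_le:
  assumes x: "x \<in> S"
  shows "card (Cen (x \<otimes> x \<otimes> x)) \<le> card (Cen x)"
proof -
  have xc: "x \<in> carrier G" and ax: "a x = x \<otimes> x \<otimes> x" using x by (auto simp: S_def)
  have "Cen (x \<otimes> x \<otimes> x) \<subseteq> a ` Cen x"
  proof
    fix c assume c: "c \<in> Cen (x \<otimes> x \<otimes> x)"
    then have cc: "c \<in> carrier G" and e: "x \<otimes> x \<otimes> x \<otimes> c = c \<otimes> (x \<otimes> x \<otimes> x)" by (auto simp: Cen_def)
    obtain d where d: "d \<in> carrier G" "a d = c" using asurj[OF cc] by blast
    have "a (x \<otimes> d) = a (d \<otimes> x)" using d xc ax e by simp
    then have "x \<otimes> d = d \<otimes> x" using ainj d xc by simp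
    then show "c \<in> a ` Cen x" using d by (auto simp: Cen_def)
  qed
  then have "card (Cen (x \<otimes> x \<otimes> x)) \<le> card (a ` Cen x)"
    by (rule card_mono[rotated]) (rule finite_imageI, rule finite_subset[OF _ fin], auto simp: Cen_def)
  also have "\<dots> \<le> card (Cen x)" by (rule card_image_le) (rule finite_subset[OF _ fin], auto simp: Cen_def)
  finally show ?thesis .
qed

lemma tau_bound:
  assumes B: "B \<subseteq> carrier G"
  shows "card {h \<in> carrier G. inv h \<otimes> a h \<in> B} \<le> card F * card B"
proof -
  define r where "r b = (SOME k. k \<in> carrier G \<and> inv k \<otimes> a k = b)" for b
  define H where "H = {h \<in> carrier G. inv h \<otimes> a h \<in> B}"
  have rk: "r (inv h \<otimes> a h) \<in> carrier G \<and> inv (r (inv h \<otimes> a h)) \<otimes> a (r (inv h \<otimes> a h)) = inv h \<otimes> a h"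
    if h: "h \<in> carrier G" for h
    unfolding r_def by (rule someI[of _ h]) (simp add: h)
  define \<phi> where "\<phi> h = (h \<otimes> inv (r (inv h \<otimes> a h)), inv h \<otimes> a h)" for h
  have inj: "inj_on \<phi> H"
  proof (rule inj_onI)
    fix h h' assume h: "h \<in> H" and h': "h' \<in> H" and e: "\<phi> h = \<phi> h'"
    have hc: "h \<in> carrier G" "h' \<in> carrier G" using h h' by (auto simp: H_def)
    from e have e1: "inv h \<otimes> a h = inv h' \<otimes> a h'" by (simp add: \<phi>_def)
    with e have "h \<otimes> inv (r (inv h \<otimes> a h)) = h' \<otimes> inv (r (inv h \<otimes> a h))" by (simp add: \<phi>_def)
    then show "h = h'" using rk[OF hc(1)] hc by simp
  qed
  have img: "\<phi> ` H \<subseteq> F \<times> B"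
  proof
    fix p assume "p \<in> \<phi> ` H"
    then obtain h where h: "h \<in> H" and p: "p = \<phi> h" by blast
    have hc: "h \<in> carrier G" and hB: "inv h \<otimes> a h \<in> B" using h by (auto simp: H_def)
    define k where "k = r (inv h \<otimes> a h)"
    have kc: "k \<in> carrier G" and ek: "inv k \<otimes> a k = inv h \<otimes> a h" using rk[OF hc] by (auto simp: k_def)
    have ah: "a h = h \<otimes> (inv k \<otimes> a k)" using ek hc kc by simp
    have "a (h \<otimes> inv k) = h \<otimes> inv k" using hc kc ah by (simp add: m_assoc)
    then have "h \<otimes> inv k \<in> F" using hc kc by (simp add: F_def)
    then show "p \<in> F \<times> B" using p hB by (simp add: \<phi>_def k_def)
  qed
  have fB: "finite B" using B fin finite_subset by blast
  have fF: "finite F" using fin by (simp add: F_def)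
  have "card H \<le> card (F \<times> B)" using card_inj_on_le[OF inj img] fB fF by simp
  then show ?thesis by (simp add: H_def card_cartesian_product)
qed

lemma Wbound:
  assumes y: "y \<in> carrier G"
  shows "card {g \<in> carrier G. g \<otimes> y \<otimes> inv g \<in> S} \<le> card F * card (Cen y)"
proof (cases "{g \<in> carrier G. g \<otimes> y \<otimes> inv g \<in> S} = {}")
  case True then show ?thesis by (simp only: True card.empty zero_le)
next
  case False
  then obtain g0 where g0: "g0 \<in> carrier G" and x0S: "g0 \<otimes> y \<otimes> inv g0 \<in> S" by blast
  define x0 where "x0 = g0 \<otimes> y \<otimes> inv g0"
  have x0c: "x0 \<in> carrier G" using g0 y by (simp add: x0_def)
  define W where "W = {g \<in> carrier G. g \<otimes> y \<otimes> inv g \<in> S}"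
  define H where "H = {h \<in> carrier G. inv h \<otimes> a h \<in> Cen (x0 \<otimes> x0 \<otimes> x0)}"
  have inj: "inj_on (\<lambda>g. g \<otimes> inv g0) W"
    by (rule inj_onI) (use g0 in \<open>auto simp: W_def\<close>)
  have img: "(\<lambda>g. g \<otimes> inv g0) ` W \<subseteq> H"
  proof
    fix p assume "p \<in> (\<lambda>g. g \<otimes> inv g0) ` W"
    then obtain g where g: "g \<in> carrier G" and gS: "g \<otimes> y \<otimes> inv g \<in> S" and p: "p = g \<otimes> inv g0"
      by (auto simp: W_def)
    have "(g \<otimes> inv g0) \<otimes> x0 \<otimes> inv (g \<otimes> inv g0) = g \<otimes> y \<otimes> inv g"
      using g g0 y by (simp add: x0_def m_assoc inv_mult_group)
    then have "inv (g \<otimes> inv g0) \<otimes> a (g \<otimes> inv g0) \<in> Cen (x0 \<otimes> x0 \<otimes> x0)"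
      using conj_S[of "g \<otimes> inv g0" x0] g g0 gS x0S by (simp add: x0_def)
    then show "p \<in> H" using p g g0 by (simp add: H_def)
  qed
  have fH: "finite H" using fin by (simp add: H_def)
  have "card W \<le> card H" using card_inj_on_le[OF inj img fH] .
  also have "\<dots> \<le> card F * card (Cen (x0 \<otimes> x0 \<otimes> x0))" unfolding H_def
    by (rule tau_bound) (auto simp: Cen_def)
  also have "\<dots> \<le> card F * card (Cen x0)"
    using Cen_cube_le[of x0] x0S by (simp add: x0_def)
  also have "\<dots> \<le> card F * card (Cen y)"
    using Cen_conj_le[OF g0 y] by (simp add: x0_def)
  finally show ?thesis by (simp add: W_def)
qed

lemma card_filter_sum: "finite A \<Longrightarrow> card {y \<in> A. P y} = (\<Sum>y\<in>A. if P y then 1 else 0)"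
  by (simp add: sum.inter_filter[symmetric])

lemma main_count:
  "card S * card S \<le> card {(x,y). x \<in> carrier G \<and> y \<in> carrier G \<and> x \<otimes> y = y \<otimes> x}"
proof -
  let ?N = "card {(x,y). x \<in> carrier G \<and> y \<in> carrier G \<and> x \<otimes> y = y \<otimes> x}"
  have Neq: "{(x,y). x \<in> carrier G \<and> y \<in> carrier G \<and> x \<otimes> y = y \<otimes> x} = Sigma (carrier G) Cen"
    by (auto simp: Cen_def)
  have fC: "\<forall>y\<in>carrier G. finite (Cen y)" using fin by (simp add: Cen_def)
  have Nsum: "?N = (\<Sum>y\<in>carrier G. card (Cen y))" unfolding Neq using fin fC by simp
  have "card S * card (carrier G) = (\<Sum>g\<in>carrier G. card {y \<in> carrier G. g \<otimes> y \<otimes> inv g \<in> S})"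
    using conj_count by simp
  also have "\<dots> = (\<Sum>g\<in>carrier G. \<Sum>y\<in>carrier G. if g \<otimes> y \<otimes> inv g \<in> S then 1 else 0)"
    using fin by (simp add: card_filter_sum)
  also have "\<dots> = (\<Sum>y\<in>carrier G. \<Sum>g\<in>carrier G. if g \<otimes> y \<otimes> inv g \<in> S then 1 else 0)"
    by (rule sum.swap)
  also have "\<dots> = (\<Sum>y\<in>carrier G. card {g \<in> carrier G. g \<otimes> y \<otimes> inv g \<in> S})"
    using fin by (simp add: card_filter_sum)
  also have "\<dots> \<le> (\<Sum>y\<in>carrier G. card F * card (Cen y))"
    by (rule sum_mono) (rule Wbound)
  also have "\<dots> = card F * ?N" by (simp add: Nsum sum_distrib_left)
  finally have A: "card S * card (carrier G) \<le> card F * ?N" .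
  have "card S * (card S * card F) \<le> card S * card (carrier G)"
    using SF by (rule mult_le_mono2)
  then have "card F * (card S * card S) \<le> card S * card (carrier G)" by (simp add: ac_simps)
  with A have "card F * (card S * card S) \<le> card F * ?N" by linarith
  moreover have "card F > 0"
  proof -
    have "\<one> \<in> F" using hom_one[OF ahom is_group is_group] by (simp add: F_def)
    then show ?thesis using fin by (auto simp: F_def card_gt_0_iff)
  qed
  ultimately show ?thesis by simp
qed

end

theorem proposition7:
  fixes G :: "('a, 'b) monoid_scheme"
  assumes "group G" and "finite (carrier G)" and "odd (order G)"
  shows "comm_prob G \<ge> (lambda_e 3 G) ^ 2"
proof -
  interpret group G by fact
  define n where "n = card (carrier G)"
  define f where "f \<alpha> = real (card {g \<in> carrier G. \<alpha> g = g [^]\<^bsub>G\<^esub> (3::int)}) / real (card (carrier G))" for \<alpha>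
  have sub: "f ` iso G G \<subseteq> (\<lambda>k. real k / real n) ` {0..n}"
  proof
    fix v assume "v \<in> f ` iso G G"
    then obtain \<alpha> where v: "v = f \<alpha>" by blast
    have "card {g \<in> carrier G. \<alpha> g = g [^]\<^bsub>G\<^esub> (3::int)} \<le> n"
      unfolding n_def by (rule card_mono) (use assms(2) in auto)
    then show "v \<in> (\<lambda>k. real k / real n) ` {0..n}" unfolding v f_def n_def by auto
  qed
  have finI: "finite (f ` iso G G)" by (rule finite_subset[OF sub]) simp
  have neI: "f ` iso G G \<noteq> {}" using id_iso by blast
  have "lambda_e 3 G = Max (f ` iso G G)" by (simp add: lambda_e_def f_def)
  also have "\<dots> \<in> f ` iso G G" by (rule Max_in[OF finI neI])
  finally obtain \<alpha> where \<alpha>: "\<alpha> \<in> iso G G" and lam: "lambda_e 3 G = f \<alpha>" by blast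
  interpret c: cubeaut G \<alpha>
    by unfold_locales (use \<alpha> assms in auto)
  have cube: "g [^]\<^bsub>G\<^esub> (3::int) = g \<otimes>\<^bsub>G\<^esub> g \<otimes>\<^bsub>G\<^esub> g" if "g \<in> carrier G" for g
  proof -
    have "g [^]\<^bsub>G\<^esub> (3::int) = g [^]\<^bsub>G\<^esub> (3::nat)" using int_pow_int[of G g 3] by simp
    also have "\<dots> = g \<otimes>\<^bsub>G\<^esub> g \<otimes>\<^bsub>G\<^esub> g" using that by (simp add: numeral_3_eq_3)
    finally show ?thesis .
  qed
  have Seq: "{g \<in> carrier G. \<alpha> g = g [^]\<^bsub>G\<^esub> (3::int)} = c.S"
    using cube by (auto simp: c.S_def)
  let ?N = "card {(x,y). x \<in> carrier G \<and> y \<in> carrier G \<and> x \<otimes>\<^bsub>G\<^esub> y = y \<otimes>\<^bsub>G\<^esub> x}"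
  have key: "real (card c.S) ^ 2 \<le> real ?N"
    using c.main_count by (simp add: power2_eq_square flip: of_nat_mult)
  have "(lambda_e 3 G) ^ 2 = real (card c.S) ^ 2 / real n ^ 2"
    by (simp add: lam f_def Seq n_def power_divide)
  also have "\<dots> \<le> real ?N / real n ^ 2"
    by (rule divide_right_mono[OF key]) simp
  also have "\<dots> = comm_prob G" by (simp add: comm_prob_def n_def)
  finally show ?thesis .
qed

end
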